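(* Let $\mathcal{H}$ be a convex polytope contained in the simplex $\Delta_{S-1}$, represented as the convex hull of a finite set of vertices $\{\boldsymbol{g}_1,\ldots,\boldsymbol{g}_N\}$, where each $\boldsymbol{g}_i\in\Delta_{S-1}\subset\mathbb{R}^S$ is distinct, and let $G=(\boldsymbol{g}_1,\ldots,\boldsymbol{g}_N)\in\mathbb{R}^{S\times N}$. Suppose the model class $\mathcal{F}\subset L_2(Q_{\boldsymbol{X}})$ is convex and contains $\tau^{(s)}$ for all $s\in\{1,\ldots,S\}$. Let \[ f^*_{\operatorname{regret},\mathcal{H}}=\underset{f\in\mathcal{F}}{\arg\min}\ \max_{Q\in\mathcal{C}(Q_{\boldsymbol{X}},\mathcal{H})}\Big\{\mathbb{E}_Q\big[(Y(1)-Y(0)-f(\boldsymbol{X}))^2\big]-\min_{f'\in\mathcal{F}}\mathbb{E}_Q\big[(Y(1)-Y(0)-f'(\boldsymbol{X}))^2\big]\Big\} \] be the minimax regret CATE over $\mathcal{C}(Q_{\boldsymbol{X}},\mathcal{H})$. Then \[ f^*_{\operatorname{regret},\mathcal{H}}(\cdot)=(\boldsymbol{q}^* )^\top\boldsymbol{\tau}_{\operatorname{poly}}(\cdot)\quad\text{with}\quad \boldsymbol{q}^*=\underset{\boldsymbol{q}\in\Delta_{N-1}}{\arg\min}\ \big(\boldsymbol{q}^\top\Gamma_{\operatorname{poly}}\boldsymbol{q}-\boldsymbol{q}^\top\boldsymbol{d}_{\operatorname{poly}}\big), \] where $\boldsymbol{\tau}(\cdot)=(\tau^{(1)}(\cdot),\ldots,\tau^{(S)}(\cdot))^\top$,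 $\boldsymbol{\tau}_{\operatorname{poly}}(\cdot)=G^\top\boldsymbol{\tau}(\cdot)$, $\Gamma_{\operatorname{poly}}=G^\top\Gamma G$ with $\Gamma_{k,l}=\mathbb{E}_{Q_{\boldsymbol{X}}}[\tau^{(k)}(\boldsymbol{X})\tau^{(l)}(\boldsymbol{X})]$, and \[ \boldsymbol{d}_{\operatorname{poly}}=\Big(\mathbb{E}_{Q_{\boldsymbol{X}}}\big[(\boldsymbol{g}_1^\top\boldsymbol{\tau}(\boldsymbol{X}))^2\big],\ldots,\mathbb{E}_{Q_{\boldsymbol{X}}}\big[(\boldsymbol{g}_N^\top\boldsymbol{\tau}(\boldsymbol{X}))^2\big]\Big)^\top \] is the diagonal vector of $\Gamma_{\operatorname{poly}}$.
   Context: Setting: there are $S$ source sites; site $s$ has a joint distribution $P^{(s)}$ of potential outcomes $(Y(1),Y(0))$ (real-valued) and covariates $\boldsymbol{X}\in\mathcal{X}$, with site-specific conditional average treatment effect (CATE) $\tau^{(s)}(\boldsymbol{x})=\mathbb{E}_{P^{(s)}}[Y(1)-Y(0)\mid \boldsymbol{X}=\boldsymbol{x}]$. $Q_{\boldsymbol{X}}$ is a target covariate distribution on $\mathcal{X}$ and $L_2(Q_{\boldsymbol{X}})$ the square-integrable functions w.r.t. it. For a joint distribution $Q$ of $(Y(1),Y(0),\boldsymbol{X})$, $\tau_Q(\boldsymbol{x})=\mathbb{E}_Q[Y(1)-Y(0)\mid\boldsymbol{X}=\boldsymbol{x}]$. $\Delta_{m-1}=\{\boldsymbol{q}\in\mathbb{R}^m:\sum_i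 q_i=1,\ \min_i q_i\ge 0\}$. For a convex set $\mathcal{H}\subseteq\Delta_{S-1}$, the restricted uncertainty set is $\mathcal{C}(Q_{\boldsymbol{X}},\mathcal{H})=\{Q=(Q_{\boldsymbol{X}},Q_{(Y(1),Y(0))\mid\boldsymbol{X}}):\ \tau_Q(\cdot)=\sum_{s=1}^S q_s\tau^{(s)}(\cdot)\text{ for some }\boldsymbol{q}\in\mathcal{H}\}$. *)

theory Defs
  imports "HOL-Analysis.Analysis" "HOL-Probability.Probability"
begin

definition prob_simplex :: "(real^'m::finite) set" where
  "prob_simplex = {q. (\<forall>i. 0 \<le> q $ i) \<and> (\<Sum>i\<in>UNIV. q $ i) = 1}"

definition L2 :: "'x measure \<Rightarrow> ('x \<Rightarrow> real) set" where
  "L2 M = {f. f \<in> borel_measurable M \<and> integrable M (\<lambda>x. (f x)\<^sup>2)}"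

definition convex_fun_set :: "('x \<Rightarrow> real) set \<Rightarrow> bool" where
  "convex_fun_set F \<longleftrightarrow>
     (\<forall>f\<in>F. \<forall>h\<in>F. \<forall>t::real. 0 \<le> t \<and> t \<le> 1 \<longrightarrow> (\<lambda>x. t * f x + (1 - t) * h x) \<in> F)"

text \<open>Joint distributions Q of ((Y(1),Y(0)),X) are measures on (R x R) x X.
  Treatment effect Y(1)-Y(0) of an outcome point:\<close>
definition te :: "(real \<times> real) \<times> 'x \<Rightarrow> real" where
  "te \<omega> = fst (fst \<omega>) - snd (fst \<omega>)"

text \<open>Q is a joint distribution with X-marginal QX, square-integrable treatment effect,
  and CATE E_Q[Y(1)-Y(0) | X] equal to tf (stated by the defining property of
  conditional expectation).\<close>
definition has_cate :: "'x measure \<Rightarrow> ((real \<times> real) \<times> 'x) measure \<Rightarrow> ('x \<Rightarrow> real) \<Rightarrow> bool" where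
  "has_cate QX Q tf \<longleftrightarrow>
     sets Q = sets ((borel \<Otimes>\<^sub>M borel) \<Otimes>\<^sub>M QX) \<and> prob_space Q \<and>
     distr Q QX snd = QX \<and>
     integrable Q (\<lambda>\<omega>. (te \<omega>)\<^sup>2) \<and> integrable Q te \<and>
     tf \<in> borel_measurable QX \<and> integrable QX tf \<and>
     (\<forall>A\<in>sets QX. (\<integral>\<omega>. indicator (snd -` A \<inter> space Q) \<omega> * te \<omega> \<partial>Q)
                   = (\<integral>x. indicator A x * tf x \<partial>QX))"

definition unc_set :: "'x measure \<Rightarrow> ('s::finite \<Rightarrow> 'x \<Rightarrow> real) \<Rightarrow> (real^'s) set
     \<Rightarrow> ((real \<times> real) \<times> 'x) measure set" where
  "unc_set QX tau H = {Q. \<exists>q\<in>H. has_cate QX Q (\<lambda>x. \<Sum>s\<in>UNIV. q $ s * tau s x)}"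

definition sq_risk :: "((real \<times> real) \<times> 'x) measure \<Rightarrow> ('x \<Rightarrow> real) \<Rightarrow> real" where
  "sq_risk Q f = (\<integral>\<omega>. (te \<omega> - f (snd \<omega>))\<^sup>2 \<partial>Q)"

definition regret :: "('x \<Rightarrow> real) set \<Rightarrow> ((real \<times> real) \<times> 'x) measure \<Rightarrow> ('x \<Rightarrow> real) \<Rightarrow> real" where
  "regret F Q f = sq_risk Q f - (INF f'\<in>F. sq_risk Q f')"

definition worst_regret :: "'x measure \<Rightarrow> ('s::finite \<Rightarrow> 'x \<Rightarrow> real) \<Rightarrow> (real^'s) set
     \<Rightarrow> ('x \<Rightarrow> real) set \<Rightarrow> ('x \<Rightarrow> real) \<Rightarrow> real" where
  "worst_regret QX tau H F f = (SUP Q\<in>unc_set QX tau H. regret F Q f)"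

definition tau_vec :: "('s::finite \<Rightarrow> 'x \<Rightarrow> real) \<Rightarrow> 'x \<Rightarrow> real^'s" where
  "tau_vec tau x = (\<chi> s. tau s x)"

definition Gamma :: "'x measure \<Rightarrow> ('s::finite \<Rightarrow> 'x \<Rightarrow> real) \<Rightarrow> real^'s^'s" where
  "Gamma QX tau = (\<chi> k l. \<integral>x. tau k x * tau l x \<partial>QX)"

definition Gmat :: "('n::finite \<Rightarrow> real^'s::finite) \<Rightarrow> real^'n^'s" where
  "Gmat g = (\<chi> s i. g i $ s)"

definition Gamma_poly :: "'x measure \<Rightarrow> ('s::finite \<Rightarrow> 'x \<Rightarrow> real) \<Rightarrow> ('n::finite \<Rightarrow> real^'s) \<Rightarrow> real^'n^'n" where
  "Gamma_poly QX tau g = transpose (Gmat g) ** Gamma QX tau ** Gmat g"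

definition d_poly :: "'x measure \<Rightarrow> ('s::finite \<Rightarrow> 'x \<Rightarrow> real) \<Rightarrow> ('n::finite \<Rightarrow> real^'s) \<Rightarrow> real^'n" where
  "d_poly QX tau g = (\<chi> i. \<integral>x. (g i \<bullet> tau_vec tau x)\<^sup>2 \<partial>QX)"

definition tau_poly :: "('s::finite \<Rightarrow> 'x \<Rightarrow> real) \<Rightarrow> ('n::finite \<Rightarrow> real^'s) \<Rightarrow> 'x \<Rightarrow> real^'n" where
  "tau_poly tau g x = transpose (Gmat g) *v tau_vec tau x"

end

theory Submission
  imports Defs
begin

lemma L2_mult_integrable:
  fixes f g :: "'a \<Rightarrow> real"
  assumes "f \<in> borel_measurable M" "g \<in> borel_measurable M"
    "integrable M (\<lambda>x. (f x)\<^sup>2)" "integrable M (\<lambda>x. (g x)\<^sup>2)"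
  shows "integrable M (\<lambda>x. f x * g x)"
proof (rule Bochner_Integration.integrable_bound[where f="\<lambda>x. (f x)\<^sup>2 + (g x)\<^sup>2"])
  show "integrable M (\<lambda>x. (f x)\<^sup>2 + (g x)\<^sup>2)" using assms by simp
  show "(\<lambda>x. f x * g x) \<in> borel_measurable M" using assms by simp
  have "\<And>x. norm (f x * g x) \<le> norm ((f x)\<^sup>2 + (g x)\<^sup>2)"
  proof -
    fix x
    have "0 \<le> (\<bar>f x\<bar> - \<bar>g x\<bar>)\<^sup>2" by simp
    then have "2 * \<bar>f x\<bar> * \<bar>g x\<bar> \<le> (f x)\<^sup>2 + (g x)\<^sup>2"
      by (simp add: power2_diff)
    moreover have "0 \<le> \<bar>f x\<bar> * \<bar>g x\<bar>" by simp
    ultimately have "\<bar>f x\<bar> * \<bar>g x\<bar> \<le> (f x)\<^sup>2 + (g x)\<^sup>2" by linarith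
    then show "norm (f x * g x) \<le> norm ((f x)\<^sup>2 + (g x)\<^sup>2)"
      by (simp add: abs_mult)
  qed
  then show "AE x in M. norm (f x * g x) \<le> norm ((f x)\<^sup>2 + (g x)\<^sup>2)" by simp
qed

lemma L2_memI: "f \<in> borel_measurable M \<Longrightarrow> integrable M (\<lambda>x. (f x)\<^sup>2) \<Longrightarrow> f \<in> L2 M"
  by (simp add: L2_def)

lemma L2_meas: "f \<in> L2 M \<Longrightarrow> f \<in> borel_measurable M" by (simp add: L2_def)
lemma L2_int: "f \<in> L2 M \<Longrightarrow> integrable M (\<lambda>x. (f x)\<^sup>2)" by (simp add: L2_def)

lemma L2_mult: "f \<in> L2 M \<Longrightarrow> g \<in> L2 M \<Longrightarrow> integrable M (\<lambda>x. f x * g x)"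
  by (rule L2_mult_integrable) (auto simp: L2_def)

lemma L2_add: assumes "f \<in> L2 M" "g \<in> L2 M" shows "(\<lambda>x. f x + g x) \<in> L2 M"
proof (rule L2_memI)
  show "(\<lambda>x. f x + g x) \<in> borel_measurable M" using assms by (auto simp: L2_def intro!: borel_measurable_add)
  have "integrable M (\<lambda>x. (f x)\<^sup>2 + (g x)\<^sup>2 + 2 * f x * g x)"
    using assms L2_mult[OF assms] unfolding L2_def
    by (intro Bochner_Integration.integrable_add) (auto simp: mult.assoc)
  then show "integrable M (\<lambda>x. (f x + g x)\<^sup>2)" by (simp add: power2_sum)
qed

lemma L2_cmult: assumes "f \<in> L2 M" shows "(\<lambda>x. c * f x) \<in> L2 M"
proof (rule L2_memI)
  show "(\<lambda>x. c * f x) \<in> borel_measurable M" using assms by (auto simp: L2_def intro!: borel_measurable_times)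
  have "integrable M (\<lambda>x. c\<^sup>2 * (f x)\<^sup>2)" using assms by (simp add: L2_def)
  then show "integrable M (\<lambda>x. (c * f x)\<^sup>2)" by (simp add: power_mult_distrib)
qed

lemma L2_diff: assumes "f \<in> L2 M" "g \<in> L2 M" shows "(\<lambda>x. f x - g x) \<in> L2 M"
  using L2_add[OF assms(1) L2_cmult[OF assms(2), of "-1"]] by simp

lemma L2_zero: "(\<lambda>x. 0) \<in> L2 M" by (simp add: L2_def)

lemma L2_sum: "finite A \<Longrightarrow> (\<And>i. i \<in> A \<Longrightarrow> f i \<in> L2 M) \<Longrightarrow> (\<lambda>x. \<Sum>i\<in>A. f i x) \<in> L2 M"
proof (induction A rule: finite_induct)
  case empty then show ?case by (simp add: L2_zero)
next
  case (insert a A)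
  then show ?case using L2_add[of "f a" M "\<lambda>x. \<Sum>i\<in>A. f i x"] by simp
qed

lemma L2_wsum: "finite A \<Longrightarrow> (\<And>i. i \<in> A \<Longrightarrow> f i \<in> L2 M) \<Longrightarrow> (\<lambda>x. \<Sum>i\<in>A. w i * f i x) \<in> L2 M"
  using L2_sum[of A "\<lambda>i x. w i * f i x" M] L2_cmult by blast

lemma L2_integrable: assumes "finite_measure M" "f \<in> L2 M" shows "integrable M f"
proof (rule Bochner_Integration.integrable_bound[where f="\<lambda>x. 1 + (f x)\<^sup>2"])
  interpret finite_measure M by fact
  show "integrable M (\<lambda>x. 1 + (f x)\<^sup>2)" using assms by (simp add: L2_def)
  show "f \<in> borel_measurable M" using assms by (simp add: L2_def)
  have "\<And>x. norm (f x) \<le> norm (1 + (f x)\<^sup>2)"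
  proof -
    fix x
    have "0 \<le> (\<bar>f x\<bar> - 1/2)\<^sup>2" by simp
    then have "\<bar>f x\<bar> \<le> (f x)\<^sup>2 + (1/2)\<^sup>2" by (simp add: power2_diff)
    moreover have "(1/2::real)\<^sup>2 \<le> 1" by (simp add: power2_eq_square)
    ultimately have "\<bar>f x\<bar> \<le> 1 + (f x)\<^sup>2" by linarith
    then show "norm (f x) \<le> norm (1 + (f x)\<^sup>2)" by simp
  qed
  then show "AE x in M. norm (f x) \<le> norm (1 + (f x)\<^sup>2)" by simp
qed


lemma cate_basic:
  assumes "has_cate QX Q tf"
  shows "snd \<in> measurable Q QX" "prob_space Q" "distr Q QX snd = QX"
    "te \<in> borel_measurable Q" "te \<in> L2 Q" "tf \<in> borel_measurable QX"
proof -
  have s: "sets Q = sets ((borel \<Otimes>\<^sub>M borel) \<Otimes>\<^sub>M QX)" using assms by (simp add: has_cate_def)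
  show "snd \<in> measurable Q QX"
    using measurable_cong_sets[OF s refl] measurable_snd by blast
  show "prob_space Q" "distr Q QX snd = QX" "tf \<in> borel_measurable QX"
    using assms by (simp_all add: has_cate_def)
  show tm: "te \<in> borel_measurable Q" using assms by (auto simp: has_cate_def)
  show "te \<in> L2 Q" using assms tm by (auto simp: has_cate_def L2_def)
qed

lemma L2_snd:
  assumes "snd \<in> measurable Q QX" "distr Q QX snd = QX" "k \<in> L2 QX"
  shows "(\<lambda>\<omega>. k (snd \<omega>)) \<in> L2 Q"
proof -
  have [measurable]: "k \<in> borel_measurable QX" using assms by (simp add: L2_def)
  have [measurable]: "snd \<in> measurable Q QX" by fact
  have "integrable (distr Q QX snd) (\<lambda>x. (k x)\<^sup>2)" using assms by (simp add: L2_def)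
  then have "integrable Q (\<lambda>\<omega>. (k (snd \<omega>))\<^sup>2)"
    by (subst (asm) integrable_distr_eq) auto
  then show ?thesis by (simp add: L2_def)
qed

lemma int_snd:
  fixes k :: "_ \<Rightarrow> real"
  assumes "snd \<in> measurable Q QX" "distr Q QX snd = QX" "k \<in> borel_measurable QX"
  shows "(\<integral>\<omega>. k (snd \<omega>) \<partial>Q) = (\<integral>x. k x \<partial>QX)"
  using integral_distr[OF assms(1) assms(3)] assms(2) by simp

lemma cate_orth:
  assumes hc: "has_cate QX Q tf" and tf: "tf \<in> L2 QX" and k: "k \<in> L2 QX"
  shows "integrable Q (\<lambda>\<omega>. k (snd \<omega>) * te \<omega>)"
    "(\<integral>\<omega>. k (snd \<omega>) * te \<omega> \<partial>Q) = (\<integral>x. k x * tf x \<partial>QX)"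
proof -
  note b = cate_basic[OF hc]
  have sm[measurable]: "snd \<in> measurable Q QX" by (rule b(1))
  interpret prob_space Q by (rule b(2))
  have tem[measurable]: "te \<in> borel_measurable Q" by (rule b(4))
  have tfm[measurable]: "tf \<in> borel_measurable QX" by (rule b(6))
  have km[measurable]: "k \<in> borel_measurable QX" using k by (simp add: L2_def)
  define Fs where "Fs = vimage_algebra (space Q) snd QX"
  have sub: "subalgebra Q Fs"
    unfolding subalgebra_def Fs_def using sets_image_in_sets[OF refl sm] by simp
  interpret finite_measure_subalgebra Q Fs
    by unfold_locales (rule sub)
  have sQ: "snd \<in> space Q \<rightarrow> space QX" using measurable_space[OF sm] by blast
  have sF: "snd \<in> measurable Fs QX" unfolding Fs_def by (rule measurable_vimage_algebra1[OF sQ])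
  have kF: "(\<lambda>\<omega>. k (snd \<omega>)) \<in> borel_measurable Fs" using measurable_compose[OF sF km] .
  have tfF: "(\<lambda>\<omega>. tf (snd \<omega>)) \<in> borel_measurable Fs" using measurable_compose[OF sF tfm] .
  have tfint: "integrable QX tf" using hc by (simp add: has_cate_def)
  have intQ: "integrable Q (\<lambda>\<omega>. tf (snd \<omega>))"
    using tfint b(3) integrable_distr_eq[OF sm tfm] by simp
  have teint: "integrable Q te" using hc by (simp add: has_cate_def)
  have AEc: "AE \<omega> in Q. real_cond_exp Q Fs te \<omega> = tf (snd \<omega>)"
  proof (rule real_cond_exp_charact)
    fix A assume "A \<in> sets Fs"
    then obtain B where B: "B \<in> sets QX" and A: "A = snd -` B \<inter> space Q"
      unfolding Fs_def sets_vimage_algebra2[OF sQ] by blast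
    have "(\<integral>\<omega>. indicator A \<omega> * tf (snd \<omega>) \<partial>Q) = (\<integral>\<omega>. indicator B (snd \<omega>) * tf (snd \<omega>) \<partial>Q)"
      by (rule Bochner_Integration.integral_cong) (auto simp: A indicator_def)
    also have "\<dots> = (\<integral>x. indicator B x * tf x \<partial>QX)"
      by (rule int_snd[OF sm b(3)]) (use B in measurable)
    also have "\<dots> = (\<integral>\<omega>. indicator A \<omega> * te \<omega> \<partial>Q)"
      using hc B A by (simp add: has_cate_def)
    finally show "(\<integral>\<omega>\<in>A. te \<omega> \<partial>Q) = (\<integral>\<omega>\<in>A. tf (snd \<omega>) \<partial>Q)"
      unfolding set_lebesgue_integral_def by simp
  qed (use teint intQ tfF in auto)
  have kQ: "(\<lambda>\<omega>. k (snd \<omega>)) \<in> L2 Q" by (rule L2_snd[OF sm b(3) k])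
  show i1: "integrable Q (\<lambda>\<omega>. k (snd \<omega>) * te \<omega>)" by (rule L2_mult[OF kQ b(5)])
  have "(\<integral>\<omega>. k (snd \<omega>) * te \<omega> \<partial>Q) = (\<integral>\<omega>. k (snd \<omega>) * real_cond_exp Q Fs te \<omega> \<partial>Q)"
    using real_cond_exp_intg(2)[OF i1 kF tem] by simp
  also have "\<dots> = (\<integral>\<omega>. k (snd \<omega>) * tf (snd \<omega>) \<partial>Q)"
    by (rule integral_cong_AE) (use AEc in auto)
  also have "\<dots> = (\<integral>x. k x * tf x \<partial>QX)"
    by (rule int_snd[OF sm b(3)]) simp
  finally show "(\<integral>\<omega>. k (snd \<omega>) * te \<omega> \<partial>Q) = (\<integral>x. k x * tf x \<partial>QX)" .
qed

lemma sq_risk_decomp: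
  assumes hc: "has_cate QX Q tf" and tf: "tf \<in> L2 QX" and f: "f \<in> L2 QX"
  shows "sq_risk Q f = (\<integral>\<omega>. (te \<omega> - tf (snd \<omega>))\<^sup>2 \<partial>Q) + (\<integral>x. (f x - tf x)\<^sup>2 \<partial>QX)"
proof -
  note b = cate_basic[OF hc]
  define k where "k = (\<lambda>x. tf x - f x)"
  have k: "k \<in> L2 QX" unfolding k_def by (rule L2_diff[OF tf f])
  have kQ: "(\<lambda>\<omega>. k (snd \<omega>)) \<in> L2 Q" by (rule L2_snd[OF b(1) b(3) k])
  have tfQ: "(\<lambda>\<omega>. tf (snd \<omega>)) \<in> L2 Q" by (rule L2_snd[OF b(1) b(3) tf])
  have nQ: "(\<lambda>\<omega>. te \<omega> - tf (snd \<omega>)) \<in> L2 Q" by (rule L2_diff[OF b(5) tfQ])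
  have i1: "integrable Q (\<lambda>\<omega>. (te \<omega> - tf (snd \<omega>))\<^sup>2)" using nQ by (simp add: L2_def)
  have i2: "integrable Q (\<lambda>\<omega>. k (snd \<omega>) * te \<omega>)"
   and e2: "(\<integral>\<omega>. k (snd \<omega>) * te \<omega> \<partial>Q) = (\<integral>x. k x * tf x \<partial>QX)"
    using cate_orth[OF hc tf k] by auto
  have i3: "integrable Q (\<lambda>\<omega>. k (snd \<omega>) * tf (snd \<omega>))" by (rule L2_mult[OF kQ tfQ])
  have e3: "(\<integral>\<omega>. k (snd \<omega>) * tf (snd \<omega>) \<partial>Q) = (\<integral>x. k x * tf x \<partial>QX)"
    by (rule int_snd[OF b(1) b(3)]) (use k tf in \<open>auto simp: L2_def\<close>)
  have i4: "integrable Q (\<lambda>\<omega>. (k (snd \<omega>))\<^sup>2)" using kQ by (simp add: L2_def)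
  have e4: "(\<integral>\<omega>. (k (snd \<omega>))\<^sup>2 \<partial>Q) = (\<integral>x. (k x)\<^sup>2 \<partial>QX)"
    by (rule int_snd[OF b(1) b(3)]) (use k in \<open>auto simp: L2_def\<close>)
  have pw: "\<And>\<omega>. (te \<omega> - f (snd \<omega>))\<^sup>2 = (te \<omega> - tf (snd \<omega>))\<^sup>2 + 2 * (k (snd \<omega>) * te \<omega>)
      - 2 * (k (snd \<omega>) * tf (snd \<omega>)) + (k (snd \<omega>))\<^sup>2"
    unfolding k_def by (simp add: power2_eq_square algebra_simps)
  have "sq_risk Q f = (\<integral>\<omega>. (te \<omega> - tf (snd \<omega>))\<^sup>2 + 2 * (k (snd \<omega>) * te \<omega>)
      - 2 * (k (snd \<omega>) * tf (snd \<omega>)) + (k (snd \<omega>))\<^sup>2 \<partial>Q)"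
    unfolding sq_risk_def pw ..
  also have "\<dots> = (\<integral>\<omega>. (te \<omega> - tf (snd \<omega>))\<^sup>2 \<partial>Q) + 2 * (\<integral>\<omega>. k (snd \<omega>) * te \<omega> \<partial>Q)
      - 2 * (\<integral>\<omega>. k (snd \<omega>) * tf (snd \<omega>) \<partial>Q) + (\<integral>\<omega>. (k (snd \<omega>))\<^sup>2 \<partial>Q)"
    using i1 i2 i3 i4 by simp
  also have "\<dots> = (\<integral>\<omega>. (te \<omega> - tf (snd \<omega>))\<^sup>2 \<partial>Q) + (\<integral>x. (k x)\<^sup>2 \<partial>QX)"
    using e2 e3 e4 by simp
  also have "(\<integral>x. (k x)\<^sup>2 \<partial>QX) = (\<integral>x. (f x - tf x)\<^sup>2 \<partial>QX)"
    unfolding k_def by (simp add: power2_commute)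
  finally show ?thesis .
qed

lemma regret_eq:
  assumes hc: "has_cate QX Q tf" and tfF: "tf \<in> F" and FL: "F \<subseteq> L2 QX" and f: "f \<in> F"
  shows "regret F Q f = (\<integral>x. (f x - tf x)\<^sup>2 \<partial>QX)"
proof -
  define nz where "nz = (\<integral>\<omega>. (te \<omega> - tf (snd \<omega>))\<^sup>2 \<partial>Q)"
  have tf: "tf \<in> L2 QX" using tfF FL by blast
  have d: "\<And>h. h \<in> F \<Longrightarrow> sq_risk Q h = nz + (\<integral>x. (h x - tf x)\<^sup>2 \<partial>QX)"
    unfolding nz_def using sq_risk_decomp[OF hc tf] FL by blast
  have "(INF f'\<in>F. sq_risk Q f') = nz"
    unfolding image_def
  proof (rule cInf_eq_minimum)
    show "nz \<in> {y. \<exists>x\<in>F. y = sq_risk Q x}" using d[OF tfF] tfF by force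
    fix y assume "y \<in> {y. \<exists>x\<in>F. y = sq_risk Q x}"
    then obtain h where "h \<in> F" "y = sq_risk Q h" by blast
    then show "nz \<le> y" using d[of h] by (simp add: integral_nonneg)
  qed
  then show ?thesis unfolding regret_def using d[OF f] by simp
qed

lemma exists_cate:
  assumes P: "prob_space QX" and tf: "tf \<in> L2 QX"
  shows "\<exists>Q. has_cate QX Q tf"
proof -
  interpret prob_space QX by fact
  define PX where "PX = ((borel::real measure) \<Otimes>\<^sub>M (borel::real measure)) \<Otimes>\<^sub>M QX"
  define phi where "phi = (\<lambda>x. ((tf x, 0::real), x))"
  have tfm[measurable]: "tf \<in> borel_measurable QX" using tf by (simp add: L2_def)
  have phim[measurable]: "phi \<in> measurable QX PX" unfolding phi_def PX_def by measurable
  have tem[measurable]: "te \<in> borel_measurable PX" unfolding te_def[abs_def] PX_def by measurable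
  have te2m: "(\<lambda>\<omega>. (te \<omega>)\<^sup>2) \<in> borel_measurable PX" by measurable
  have snm[measurable]: "snd \<in> measurable PX QX" unfolding PX_def by measurable
  define Q where "Q = distr QX PX phi"
  have spQ: "space Q = space PX" unfolding Q_def by simp
  have tfi: "integrable QX tf" by (rule L2_integrable[OF _ tf]) (rule finite_measure_axioms)
  have "has_cate QX Q tf"
    unfolding has_cate_def
  proof (intro conjI ballI)
    show "sets Q = sets ((borel \<Otimes>\<^sub>M borel) \<Otimes>\<^sub>M QX)" unfolding Q_def PX_def by simp
    show "prob_space Q" unfolding Q_def by (rule prob_space_distr[OF phim])
    have "distr Q QX snd = distr QX QX (snd \<circ> phi)" unfolding Q_def
      by (rule distr_distr[OF snm phim])
    also have "snd \<circ> phi = (\<lambda>x. x)" unfolding phi_def by auto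
    finally show "distr Q QX snd = QX" by (simp add: distr_id)
    show "integrable Q (\<lambda>\<omega>. (te \<omega>)\<^sup>2)" unfolding Q_def
      using tf by (subst integrable_distr_eq[OF phim te2m]) (auto simp: phi_def te_def L2_def)
    show "integrable Q te" unfolding Q_def
      using tfi by (subst integrable_distr_eq[OF phim]) (auto simp: phi_def te_def)
    show "tf \<in> borel_measurable QX" by fact
    show "integrable QX tf" by fact
    fix A assume A: "A \<in> sets QX"
    have As: "snd -` A \<inter> space PX \<in> sets PX" using measurable_sets[OF snm A] .
    have "(\<integral>\<omega>. indicator (snd -` A \<inter> space Q) \<omega> * te \<omega> \<partial>Q)
        = (\<integral>x. indicator (snd -` A \<inter> space PX) (phi x) * te (phi x) \<partial>QX)"
      unfolding spQ unfolding Q_def using As by (subst integral_distr[OF phim]) auto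
    also have "\<dots> = (\<integral>x. indicator A x * tf x \<partial>QX)"
      by (rule Bochner_Integration.integral_cong)
        (auto simp: phi_def te_def indicator_def PX_def space_pair_measure)
    finally show "(\<integral>\<omega>. indicator (snd -` A \<inter> space Q) \<omega> * te \<omega> \<partial>Q) = (\<integral>x. indicator A x * tf x \<partial>QX)" .
  qed
  then show ?thesis by blast
qed

lemma pw_mix:
  fixes w h :: "'i \<Rightarrow> real"
  assumes "finite A" "sum w A = 1"
  shows "(\<Sum>i\<in>A. w i * (f - h i)\<^sup>2) = (f - (\<Sum>i\<in>A. w i * h i))\<^sup>2
           + (\<Sum>i\<in>A. w i * ((\<Sum>i\<in>A. w i * h i) - h i)\<^sup>2)"
proof -
  define c where "c = (\<Sum>i\<in>A. w i * h i)"
  have z: "(\<Sum>i\<in>A. w i * (c - h i)) = 0"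
  proof -
    have "(\<Sum>i\<in>A. w i * (c - h i)) = (\<Sum>i\<in>A. w i * c) - (\<Sum>i\<in>A. w i * h i)"
      by (simp add: right_diff_distrib sum_subtractf)
    also have "\<dots> = 0" using assms(2) by (simp add: sum_distrib_right[symmetric] c_def)
    finally show ?thesis .
  qed
  have "(\<Sum>i\<in>A. w i * (f - h i)\<^sup>2)
      = (\<Sum>i\<in>A. w i * (f - c)\<^sup>2 + 2 * (f - c) * (w i * (c - h i)) + w i * (c - h i)\<^sup>2)"
    by (rule sum.cong) (simp_all add: power2_eq_square algebra_simps)
  also have "\<dots> = (\<Sum>i\<in>A. w i) * (f - c)\<^sup>2 + 2 * (f - c) * (\<Sum>i\<in>A. w i * (c - h i))
      + (\<Sum>i\<in>A. w i * (c - h i)\<^sup>2)"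
    by (simp add: sum.distrib sum_distrib_left sum_distrib_right)
  also have "\<dots> = (f - c)\<^sup>2 + (\<Sum>i\<in>A. w i * (c - h i)\<^sup>2)"
    using z assms(2) by simp
  finally show ?thesis unfolding c_def .
qed

definition Nrm :: "'x measure \<Rightarrow> ('x \<Rightarrow> real) \<Rightarrow> real" where
  "Nrm M u = (\<integral>x. (u x)\<^sup>2 \<partial>M)"

lemma Nrm_nonneg: "0 \<le> Nrm M u" unfolding Nrm_def by (simp add: integral_nonneg)

lemma mix:
  fixes w :: "'i::finite \<Rightarrow> real"
  assumes w: "sum w UNIV = 1" and hs: "\<And>i. hs i \<in> L2 M" and f: "f \<in> L2 M"
  shows "(\<Sum>i\<in>UNIV. w i * Nrm M (\<lambda>x. f x - hs i x))
      = Nrm M (\<lambda>x. f x - (\<Sum>i\<in>UNIV. w i * hs i x)) + (\<Sum>i\<in>UNIV. w i * Nrm M (\<lambda>x. (\<Sum>i\<in>UNIV. w i * hs i x) - hs i x))"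
proof -
  define c where "c = (\<lambda>x. \<Sum>i\<in>UNIV. w i * hs i x)"
  have cL: "c \<in> L2 M" unfolding c_def by (rule L2_wsum) (use hs in auto)
  have i1: "\<And>i. integrable M (\<lambda>x. w i * (f x - hs i x)\<^sup>2)"
    using L2_diff[OF f hs] by (simp add: L2_def)
  have i2: "\<And>i. integrable M (\<lambda>x. w i * (c x - hs i x)\<^sup>2)"
    using L2_diff[OF cL hs] by (simp add: L2_def)
  have i3: "integrable M (\<lambda>x. (f x - c x)\<^sup>2)"
    using L2_diff[OF f cL] by (simp add: L2_def)
  have "(\<Sum>i\<in>UNIV. w i * Nrm M (\<lambda>x. f x - hs i x)) = (\<integral>x. (\<Sum>i\<in>UNIV. w i * (f x - hs i x)\<^sup>2) \<partial>M)"
    unfolding Nrm_def using i1 by (simp add: integral_sum)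
  also have "\<dots> = (\<integral>x. (f x - c x)\<^sup>2 + (\<Sum>i\<in>UNIV. w i * (c x - hs i x)\<^sup>2) \<partial>M)"
    unfolding c_def by (intro Bochner_Integration.integral_cong refl) (rule pw_mix[OF _ w], simp)
  also have "\<dots> = Nrm M (\<lambda>x. f x - c x) + (\<Sum>i\<in>UNIV. w i * Nrm M (\<lambda>x. c x - hs i x))"
    unfolding Nrm_def using i1 i2 i3 by (simp add: integral_sum)
  finally show ?thesis unfolding c_def .
qed

lemma conv_comb_F:
  fixes fs :: "'i \<Rightarrow> 'x \<Rightarrow> real"
  assumes cF: "convex_fun_set F" and fin: "finite A"
  shows "(\<forall>i\<in>A. fs i \<in> F) \<Longrightarrow> (\<forall>i\<in>A. 0 \<le> w i) \<Longrightarrow> sum w A = 1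
     \<Longrightarrow> (\<lambda>x. \<Sum>i\<in>A. w i * fs i x) \<in> F"
  using fin
proof (induction A arbitrary: w rule: finite_induct)
  case empty then show ?case by simp
next
  case (insert a A)
  have sA: "sum w A = 1 - w a" using insert by simp
  have sAn: "0 \<le> sum w A" using insert by (simp add: sum_nonneg)
  show ?case
  proof (cases "w a = 1")
    case True
    then have "sum w A = 0" using sA by simp
    then have "\<forall>i\<in>A. w i = 0" using sum_nonneg_eq_0_iff[OF insert(1)] insert(5) by auto
    then have "(\<lambda>x. \<Sum>i\<in>insert a A. w i * fs i x) = fs a" using True insert by (simp add: fun_eq_iff)
    then show ?thesis using insert by simp
  next
    case False
    define s where "s = 1 - w a"
    have s: "0 < s" using False sA sAn unfolding s_def by simp
    have IH: "(\<lambda>x. \<Sum>i\<in>A. (w i / s) * fs i x) \<in> F"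
      using insert s by (intro insert.IH) (auto simp: sum_divide_distrib[symmetric] s_def)
    have wa: "0 \<le> w a" "w a \<le> 1" using insert sA sAn by auto
    have "(\<lambda>x. w a * fs a x + (1 - w a) * (\<Sum>i\<in>A. (w i / s) * fs i x)) \<in> F"
      using cF[unfolded convex_fun_set_def, rule_format, OF _ IH, of "fs a" "w a"] insert wa by simp
    moreover have "(\<lambda>x. w a * fs a x + (1 - w a) * (\<Sum>i\<in>A. (w i / s) * fs i x))
        = (\<lambda>x. \<Sum>i\<in>insert a A. w i * fs i x)"
      using insert s by (simp add: fun_eq_iff sum_distrib_left s_def[symmetric])
    ultimately show ?thesis by simp
  qed
qed

lemma tau_poly_eq:
  "q \<bullet> tau_poly tau g x = (\<Sum>i\<in>UNIV. q $ i * (g i \<bullet> tau_vec tau x))"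
  by (simp add: tau_poly_def inner_vec_def matrix_vector_mult_def transpose_def Gmat_def
      sum_distrib_left tau_vec_def)

lemma inner_tau: "g i \<bullet> tau_vec tau x = (\<Sum>s\<in>UNIV. g i $ s * tau s x)"
  by (simp add: inner_vec_def tau_vec_def)

lemma quad_p:
  fixes tau :: "'s::finite \<Rightarrow> 'x \<Rightarrow> real"
  assumes tL: "\<And>s. tau s \<in> L2 QX"
  shows "p \<bullet> (Gamma QX tau *v p) = Nrm QX (\<lambda>x. \<Sum>s\<in>UNIV. p $ s * tau s x)"
proof -
  have i: "\<And>s k. integrable QX (\<lambda>x. p $ s * p $ k * (tau s x * tau k x))"
    using L2_mult[OF tL tL] by simp
  have "p \<bullet> (Gamma QX tau *v p) = (\<Sum>s\<in>UNIV. \<Sum>k\<in>UNIV. p $ s * p $ k * (\<integral>x. tau s x * tau k x \<partial>QX))"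
    by (simp add: inner_vec_def matrix_vector_mult_def Gamma_def sum_distrib_left algebra_simps)
  also have "\<dots> = (\<integral>x. (\<Sum>s\<in>UNIV. \<Sum>k\<in>UNIV. p $ s * p $ k * (tau s x * tau k x)) \<partial>QX)"
    using i by (simp add: integral_sum)
  also have "\<dots> = Nrm QX (\<lambda>x. \<Sum>s\<in>UNIV. p $ s * tau s x)"
    unfolding Nrm_def power2_eq_square sum_product by (simp add: algebra_simps)
  finally show ?thesis .
qed

lemma quad_q:
  fixes tau :: "'s::finite \<Rightarrow> 'x \<Rightarrow> real" and g :: "'n::finite \<Rightarrow> real^'s"
  assumes tL: "\<And>s. tau s \<in> L2 QX"
  shows "q \<bullet> (Gamma_poly QX tau g *v q) = Nrm QX (\<lambda>x. \<Sum>i\<in>UNIV. q $ i * (g i \<bullet> tau_vec tau x))"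
proof -
  define p where "p = Gmat g *v q"
  have "q \<bullet> (Gamma_poly QX tau g *v q) = q \<bullet> (transpose (Gmat g) *v (Gamma QX tau *v p))"
    unfolding Gamma_poly_def p_def by (simp add: matrix_vector_mul_assoc matrix_mul_assoc)
  also have "\<dots> = p \<bullet> (Gamma QX tau *v p)"
    using dot_lmul_matrix[of q "transpose (Gmat g)" "Gamma QX tau *v p"]
      vector_transpose_matrix[of q "Gmat g"] unfolding p_def by metis
  also have "\<dots> = Nrm QX (\<lambda>x. \<Sum>s\<in>UNIV. p $ s * tau s x)" by (rule quad_p[OF tL])
  also have "(\<lambda>x. \<Sum>s\<in>UNIV. p $ s * tau s x) = (\<lambda>x. \<Sum>i\<in>UNIV. q $ i * (g i \<bullet> tau_vec tau x))"
  proof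
    fix x
    have "(\<Sum>s\<in>UNIV. p $ s * tau s x) = (\<Sum>s\<in>UNIV. \<Sum>i\<in>UNIV. q $ i * (g i $ s * tau s x))"
      unfolding p_def by (simp add: matrix_vector_mult_def Gmat_def sum_distrib_left sum_distrib_right algebra_simps)
    also have "\<dots> = (\<Sum>i\<in>UNIV. \<Sum>s\<in>UNIV. q $ i * (g i $ s * tau s x))"
      by (rule sum.swap)
    also have "\<dots> = (\<Sum>i\<in>UNIV. q $ i * (g i \<bullet> tau_vec tau x))"
      unfolding inner_tau by (simp add: sum_distrib_left)
    finally show "(\<Sum>s\<in>UNIV. p $ s * tau s x) = (\<Sum>i\<in>UNIV. q $ i * (g i \<bullet> tau_vec tau x))" .
  qed
  finally show ?thesis .
qed

lemma dvec: "q \<bullet> d_poly QX tau g = (\<Sum>i\<in>UNIV. q $ i * Nrm QX (\<lambda>x. g i \<bullet> tau_vec tau x))"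
  by (simp add: inner_vec_def d_poly_def Nrm_def)

lemma lin_eq:
  "(\<lambda>x. \<Sum>s\<in>UNIV. (\<Sum>i\<in>UNIV. w i *\<^sub>R g i) $ s * tau s x) = (\<lambda>x. \<Sum>i\<in>UNIV. w i * (g i \<bullet> tau_vec tau x))"
proof
  fix x
  have "(\<Sum>s\<in>UNIV. (\<Sum>i\<in>UNIV. w i *\<^sub>R g i) $ s * tau s x) = (\<Sum>s\<in>UNIV. \<Sum>i\<in>UNIV. w i * (g i $ s * tau s x))"
    by (simp add: sum_distrib_left sum_distrib_right algebra_simps)
  also have "\<dots> = (\<Sum>i\<in>UNIV. \<Sum>s\<in>UNIV. w i * (g i $ s * tau s x))"
    by (rule sum.swap)
  also have "\<dots> = (\<Sum>i\<in>UNIV. w i * (g i \<bullet> tau_vec tau x))"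
    unfolding inner_tau by (simp add: sum_distrib_left)
  finally show "(\<Sum>s\<in>UNIV. (\<Sum>i\<in>UNIV. w i *\<^sub>R g i) $ s * tau s x) = (\<Sum>i\<in>UNIV. w i * (g i \<bullet> tau_vec tau x))" .
qed

theorem corollary1:
  fixes QX :: "'x measure" and tau :: "'s::finite \<Rightarrow> 'x \<Rightarrow> real"
    and g :: "'n::finite \<Rightarrow> real^'s" and F :: "('x \<Rightarrow> real) set"
    and H :: "(real^'s) set" and qstar :: "real^'n"
  assumes "prob_space QX"
    and "inj g" and "\<forall>i. g i \<in> prob_simplex"
    and "H = convex hull (range g)"
    and "F \<subseteq> L2 QX" and "convex_fun_set F" and "\<forall>s. tau s \<in> F"
    and "qstar \<in> prob_simplex"
    and "\<forall>q\<in>prob_simplex. qstar \<bullet> (Gamma_poly QX tau g *v qstar) - qstar \<bullet> d_poly QX tau g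
                     \<le> q \<bullet> (Gamma_poly QX tau g *v q) - q \<bullet> d_poly QX tau g"
  shows "(\<lambda>x. qstar \<bullet> tau_poly tau g x) \<in> F
    \<and> (\<forall>f\<in>F. worst_regret QX tau H F (\<lambda>x. qstar \<bullet> tau_poly tau g x) \<le> worst_regret QX tau H F f)
    \<and> (\<forall>f\<in>F. worst_regret QX tau H F f \<le> worst_regret QX tau H F (\<lambda>x. qstar \<bullet> tau_poly tau g x)
           \<longrightarrow> (AE x in QX. f x = qstar \<bullet> tau_poly tau g x))"
proof -
  have tL: "\<And>s. tau s \<in> L2 QX" using assms(5,7) by blast
  have cF: "convex_fun_set F" by (rule assms(6))
  define h where "h = (\<lambda>i x. g i \<bullet> tau_vec tau x)"
  define N where "N = Nrm QX"
  define cw where "cw = (\<lambda>(w::'n \<Rightarrow> real) x. \<Sum>i\<in>UNIV. w i * h i x)"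
  define fs where "fs = (\<lambda>x. qstar \<bullet> tau_poly tau g x)"
  have fs_eq: "fs = cw (\<lambda>i. qstar $ i)"
    unfolding fs_def cw_def h_def by (simp add: tau_poly_eq fun_eq_iff)
  have hL: "\<And>i. h i \<in> L2 QX"
    unfolding h_def inner_tau by (rule L2_wsum) (auto simp: tL)
  have cwL: "\<And>w. cw w \<in> L2 QX" unfolding cw_def by (rule L2_wsum) (auto simp: hL)
  have gs: "\<And>i. (\<forall>s. 0 \<le> g i $ s) \<and> sum (\<lambda>s. g i $ s) UNIV = 1"
    using assms(3) by (simp add: prob_simplex_def)
  have hF: "\<And>i. h i \<in> F"
  proof -
    fix i
    have "(\<lambda>x. \<Sum>s\<in>UNIV. g i $ s * tau s x) \<in> F"
      using conv_comb_F[OF cF finite, where fs=tau and w="\<lambda>s. g i $ s"] assms(7) gs[of i] by auto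
    then show "h i \<in> F" unfolding h_def inner_tau .
  qed
  have cwF: "\<And>w. \<forall>i. 0 \<le> w i \<Longrightarrow> sum w UNIV = 1 \<Longrightarrow> cw w \<in> F"
    unfolding cw_def using conv_comb_F[OF cF finite, where fs=h] hF by auto
  have qs: "\<forall>i. 0 \<le> qstar $ i" "sum (\<lambda>i. qstar $ i) UNIV = 1"
    using assms(8) by (auto simp: prob_simplex_def)
  have fsF: "fs \<in> F" unfolding fs_eq by (rule cwF[OF qs])
  have fsL: "fs \<in> L2 QX" unfolding fs_eq by (rule cwL)
  have N0: "\<And>u. N (\<lambda>x. 0 - u x) = N u" unfolding N_def Nrm_def by simp
  define W where "W = (\<lambda>w. \<Sum>i\<in>UNIV. w i * N (\<lambda>x. cw w x - h i x))"
  have Phi: "\<And>q. q \<in> prob_simplex \<Longrightarrow>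
      q \<bullet> (Gamma_poly QX tau g *v q) - q \<bullet> d_poly QX tau g = - W (\<lambda>i. q $ i)"
  proof -
    fix q :: "real^'n" assume q: "q \<in> prob_simplex"
    have s1: "sum (\<lambda>i. q $ i) UNIV = 1" using q by (simp add: prob_simplex_def)
    have a: "q \<bullet> (Gamma_poly QX tau g *v q) = N (cw (\<lambda>i. q $ i))"
      unfolding quad_q[OF tL] N_def cw_def h_def ..
    have b: "q \<bullet> d_poly QX tau g = (\<Sum>i\<in>UNIV. q $ i * N (h i))"
      unfolding dvec N_def h_def ..
    have m: "(\<Sum>i\<in>UNIV. q $ i * N (\<lambda>x. 0 - h i x))
        = N (\<lambda>x. 0 - cw (\<lambda>i. q $ i) x) + W (\<lambda>i. q $ i)"
      unfolding N_def W_def cw_def by (rule mix[OF s1 hL L2_zero])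
    have "(\<lambda>x. 0 - h i x) = (\<lambda>x. - h i x)" for i by simp
    show "q \<bullet> (Gamma_poly QX tau g *v q) - q \<bullet> d_poly QX tau g = - W (\<lambda>i. q $ i)"
      using m unfolding a b N0 by (simp add: cw_def[symmetric])
  qed
  define V where "V = W (\<lambda>i. qstar $ i)"
  define D where "D = (\<lambda>j. N (\<lambda>x. fs x - h j x))"
  have V_eq: "V = (\<Sum>i\<in>UNIV. qstar $ i * D i)"
    unfolding V_def W_def D_def fs_eq ..
  have Nnn: "\<And>u. 0 \<le> N u" unfolding N_def by (rule Nrm_nonneg)
  have Vnn: "0 \<le> V" unfolding V_eq using qs Nnn D_def
    by (auto intro!: sum_nonneg mult_nonneg_nonneg)
  have opt: "\<And>q. q \<in> prob_simplex \<Longrightarrow> W (\<lambda>i. q $ i) \<le> V"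
    using assms(9) assms(8) Phi unfolding V_def by (metis neg_le_iff_le)
  have key: "\<And>j. D j \<le> V"
  proof -
    fix j
    have step: "D j - V \<le> t * D j" if t: "0 < t" "t \<le> 1" for t :: real
    proof -
      define qt :: "real^'n" where "qt = (1 - t) *\<^sub>R qstar + t *\<^sub>R axis j 1"
      have e: "\<And>i (y::real). (if i = j then t else 0) * y = (if i = j then t * y else 0)" by simp
      have qtc: "\<And>i. qt $ i = (1 - t) * qstar $ i + (if i = j then t else 0)"
        by (simp add: qt_def axis_def)
      have sqt: "sum (\<lambda>i. qt $ i) UNIV = 1"
        unfolding qtc using qs by (simp add: sum.distrib sum_distrib_left[symmetric])
      have qtS: "qt \<in> prob_simplex"
        unfolding prob_simplex_def using sqt qs t by (auto simp: qtc intro!: add_nonneg_nonneg mult_nonneg_nonneg)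
      have W1: "W (\<lambda>i. qt $ i) \<le> V" by (rule opt[OF qtS])
      have cqt: "cw (\<lambda>i. qt $ i) = (\<lambda>x. (1 - t) * fs x + t * h j x)"
        unfolding fs_eq cw_def qtc
        by (simp add: fun_eq_iff distrib_right sum.distrib sum_distrib_left mult.assoc e)
      have m: "(\<Sum>i\<in>UNIV. qt $ i * N (\<lambda>x. fs x - h i x))
          = N (\<lambda>x. fs x - cw (\<lambda>i. qt $ i) x) + W (\<lambda>i. qt $ i)"
        unfolding N_def W_def cw_def by (rule mix[OF sqt hL fsL])
      have l: "(\<Sum>i\<in>UNIV. qt $ i * N (\<lambda>x. fs x - h i x)) = (1 - t) * V + t * D j"
        unfolding V_eq qtc D_def
        by (simp add: distrib_right sum.distrib sum_distrib_left mult.assoc e)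
      have pw: "\<And>x. fs x - cw (\<lambda>i. qt $ i) x = t * (fs x - h j x)"
        unfolding cqt by (simp add: algebra_simps)
      have r: "N (\<lambda>x. fs x - cw (\<lambda>i. qt $ i) x) = t\<^sup>2 * D j"
        unfolding N_def Nrm_def D_def pw by (simp add: power_mult_distrib)
      have "(1 - t) * V + t * D j \<le> t\<^sup>2 * D j + V" using m l r W1 by linarith
      then have "t * (D j - V) \<le> t * (t * D j)" by (simp add: power2_eq_square algebra_simps)
      then show ?thesis using t by simp
    qed
    show "D j \<le> V"
    proof (rule ccontr)
      assume "\<not> D j \<le> V"
      then have lt: "V < D j" by simp
      with Vnn have Dp: "0 < D j" by simp
      define t where "t = (D j - V) / (2 * D j)"
      have t0: "0 < t" unfolding t_def using lt Dp by simp
      have t1: "t \<le> 1" unfolding t_def using lt Dp Vnn by (simp add: field_simps)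
      have "t * D j = (D j - V) / 2" unfolding t_def using Dp by (simp add: field_simps)
      then show False using step[OF t0 t1] lt by simp
    qed
  qed
  have unc_char: "\<And>Q. Q \<in> unc_set QX tau H \<Longrightarrow>
      \<exists>w. (\<forall>i. 0 \<le> w i) \<and> sum w UNIV = 1 \<and> has_cate QX Q (cw w)"
  proof -
    fix Q assume "Q \<in> unc_set QX tau H"
    then obtain q where qH: "q \<in> H" and hc: "has_cate QX Q (\<lambda>x. \<Sum>s\<in>UNIV. q $ s * tau s x)"
      unfolding unc_set_def by blast
    have fr: "finite (range g)" by simp
    obtain u where u0: "\<forall>v\<in>range g. 0 \<le> u v" and u1: "sum u (range g) = 1"
      and uq: "(\<Sum>v\<in>range g. u v *\<^sub>R v) = q"
      using qH unfolding assms(4) convex_hull_finite[OF fr] by blast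
    have inj: "inj_on g UNIV" using assms(2) by simp
    define w where "w = (\<lambda>i. u (g i))"
    have w0: "\<forall>i. 0 \<le> w i" using u0 unfolding w_def by simp
    have w1: "sum w UNIV = 1" using u1 sum.reindex[OF inj, of u] unfolding w_def by simp
    have qw: "q = (\<Sum>i\<in>UNIV. w i *\<^sub>R g i)"
      using uq sum.reindex[OF inj, of "\<lambda>v. u v *\<^sub>R v"] unfolding w_def by simp
    have "(\<lambda>x. \<Sum>s\<in>UNIV. q $ s * tau s x) = cw w"
      unfolding qw lin_eq cw_def h_def ..
    then show "\<exists>w. (\<forall>i. 0 \<le> w i) \<and> sum w UNIV = 1 \<and> has_cate QX Q (cw w)"
      using hc w0 w1 by auto
  qed
  have unc_ex: "\<And>w. \<forall>i. 0 \<le> w i \<Longrightarrow> sum w UNIV = 1 \<Longrightarrow>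
      \<exists>Q\<in>unc_set QX tau H. has_cate QX Q (cw w)"
  proof -
    fix w :: "'n \<Rightarrow> real" assume w0: "\<forall>i. 0 \<le> w i" and w1: "sum w UNIV = 1"
    have qH: "(\<Sum>i\<in>UNIV. w i *\<^sub>R g i) \<in> H"
      unfolding assms(4)
      by (rule convex_sum) (use w0 w1 in \<open>auto intro: hull_inc\<close>)
    obtain Q where hc: "has_cate QX Q (cw w)" using exists_cate[OF assms(1) cwL] by blast
    have "(\<lambda>x. \<Sum>s\<in>UNIV. (\<Sum>i\<in>UNIV. w i *\<^sub>R g i) $ s * tau s x) = cw w"
      unfolding lin_eq cw_def h_def ..
    then have "Q \<in> unc_set QX tau H" unfolding unc_set_def using qH hc by force
    then show "\<exists>Q\<in>unc_set QX tau H. has_cate QX Q (cw w)" using hc by blast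
  qed
  have reg: "\<And>Q w f. has_cate QX Q (cw w) \<Longrightarrow> \<forall>i. 0 \<le> w i \<Longrightarrow> sum w UNIV = 1 \<Longrightarrow> f \<in> F
      \<Longrightarrow> regret F Q f = N (\<lambda>x. f x - cw w x)"
    unfolding N_def Nrm_def using regret_eq[OF _ cwF assms(5)] by blast
  have Nb: "\<And>w f. \<forall>i. 0 \<le> w i \<Longrightarrow> sum w UNIV = 1 \<Longrightarrow> f \<in> L2 QX \<Longrightarrow>
      N (\<lambda>x. f x - cw w x) \<le> (\<Sum>i\<in>UNIV. w i * N (\<lambda>x. f x - h i x))"
  proof -
    fix w :: "'n \<Rightarrow> real" and f assume w0: "\<forall>i. 0 \<le> w i" and w1: "sum w UNIV = 1" and f: "f \<in> L2 QX"
    have m: "(\<Sum>i\<in>UNIV. w i * N (\<lambda>x. f x - h i x))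
        = N (\<lambda>x. f x - cw w x) + (\<Sum>i\<in>UNIV. w i * N (\<lambda>x. cw w x - h i x))"
      unfolding N_def cw_def by (rule mix[OF w1 hL f])
    have "0 \<le> (\<Sum>i\<in>UNIV. w i * N (\<lambda>x. cw w x - h i x))"
      using w0 Nnn by (auto intro!: sum_nonneg mult_nonneg_nonneg)
    then show "N (\<lambda>x. f x - cw w x) \<le> (\<Sum>i\<in>UNIV. w i * N (\<lambda>x. f x - h i x))" using m by linarith
  qed
  have Nb2: "\<And>w f. \<forall>i. 0 \<le> w i \<Longrightarrow> sum w UNIV = 1 \<Longrightarrow> f \<in> L2 QX \<Longrightarrow>
      N (\<lambda>x. f x - cw w x) \<le> (\<Sum>i\<in>UNIV. N (\<lambda>x. f x - h i x))"
  proof -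
    fix w :: "'n \<Rightarrow> real" and f assume w0: "\<forall>i. 0 \<le> w i" and w1: "sum w UNIV = 1" and f: "f \<in> L2 QX"
    have wl: "\<And>i. w i \<le> 1" using member_le_sum[of _ UNIV w] w0 w1 by auto
    have "(\<Sum>i\<in>UNIV. w i * N (\<lambda>x. f x - h i x)) \<le> (\<Sum>i\<in>UNIV. N (\<lambda>x. f x - h i x))"
      by (rule sum_mono) (rule mult_left_le_one_le[OF Nnn], use w0 wl in auto)
    then show "N (\<lambda>x. f x - cw w x) \<le> (\<Sum>i\<in>UNIV. N (\<lambda>x. f x - h i x))"
      using Nb[OF w0 w1 f] by linarith
  qed
  have Une: "unc_set QX tau H \<noteq> {}" using unc_ex[OF qs] by blast
  have bdd: "\<And>f. f \<in> F \<Longrightarrow> bdd_above ((\<lambda>Q. regret F Q f) ` unc_set QX tau H)"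
  proof -
    fix f assume f: "f \<in> F"
    show "bdd_above ((\<lambda>Q. regret F Q f) ` unc_set QX tau H)"
    proof (rule bdd_aboveI2)
      fix Q assume "Q \<in> unc_set QX tau H"
      then obtain w where w: "\<forall>i. 0 \<le> w i" "sum w UNIV = 1" "has_cate QX Q (cw w)"
        using unc_char by blast
      show "regret F Q f \<le> (\<Sum>i\<in>UNIV. N (\<lambda>x. f x - h i x))"
        using reg[OF w(3) w(1) w(2) f] Nb2[OF w(1) w(2)] f assms(5) by auto
    qed
  qed
  have Rge: "\<And>f w. f \<in> F \<Longrightarrow> \<forall>i. 0 \<le> w i \<Longrightarrow> sum w UNIV = 1 \<Longrightarrow>
      N (\<lambda>x. f x - cw w x) \<le> worst_regret QX tau H F f"
  proof -
    fix f and w :: "'n \<Rightarrow> real" assume f: "f \<in> F" and w0: "\<forall>i. 0 \<le> w i" and w1: "sum w UNIV = 1"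
    obtain Q where Q: "Q \<in> unc_set QX tau H" "has_cate QX Q (cw w)" using unc_ex[OF w0 w1] by blast
    have "regret F Q f \<le> worst_regret QX tau H F f"
      unfolding worst_regret_def by (rule cSUP_upper[OF Q(1) bdd[OF f]])
    then show "N (\<lambda>x. f x - cw w x) \<le> worst_regret QX tau H F f"
      using reg[OF Q(2) w0 w1 f] by simp
  qed
  have Rfs: "worst_regret QX tau H F fs \<le> V"
    unfolding worst_regret_def
  proof (rule cSUP_least[OF Une])
    fix Q assume "Q \<in> unc_set QX tau H"
    then obtain w where w: "\<forall>i. 0 \<le> w i" "sum w UNIV = 1" "has_cate QX Q (cw w)"
      using unc_char by blast
    have "regret F Q fs = N (\<lambda>x. fs x - cw w x)" by (rule reg[OF w(3) w(1) w(2) fsF])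
    also have "\<dots> \<le> (\<Sum>i\<in>UNIV. w i * D i)" unfolding D_def by (rule Nb[OF w(1) w(2) fsL])
    also have "\<dots> \<le> (\<Sum>i\<in>UNIV. w i * V)"
      by (rule sum_mono) (rule mult_left_mono[OF key], use w in auto)
    also have "\<dots> = V" using w(2) by (simp add: sum_distrib_right[symmetric])
    finally show "regret F Q fs \<le> V" .
  qed
  have Rf: "\<And>f. f \<in> F \<Longrightarrow> N (\<lambda>x. f x - fs x) + V \<le> worst_regret QX tau H F f"
  proof -
    fix f assume f: "f \<in> F"
    have fL: "f \<in> L2 QX" using f assms(5) by blast
    have m: "(\<Sum>i\<in>UNIV. qstar $ i * N (\<lambda>x. f x - h i x)) = N (\<lambda>x. f x - fs x) + V"
      unfolding fs_eq V_def W_def N_def cw_def by (rule mix[OF qs(2) hL fL])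
    have each: "N (\<lambda>x. f x - h j x) \<le> worst_regret QX tau H F f" for j
    proof -
      define w :: "'n \<Rightarrow> real" where "w = (\<lambda>i. if i = j then 1 else 0)"
      have w0: "\<forall>i. 0 \<le> w i" and w1: "sum w UNIV = 1" unfolding w_def by auto
      have e: "\<And>i y. w i * y = (if i = j then y else 0)" unfolding w_def by simp
      have "cw w = h j" unfolding cw_def e by (simp add: fun_eq_iff)
      then show ?thesis using Rge[OF f w0 w1] by simp
    qed
    have "(\<Sum>i\<in>UNIV. qstar $ i * N (\<lambda>x. f x - h i x)) \<le> (\<Sum>i\<in>UNIV. qstar $ i * worst_regret QX tau H F f)"
      by (rule sum_mono) (rule mult_left_mono[OF each], use qs in auto)
    also have "\<dots> = worst_regret QX tau H F f" using qs(2) by (simp add: sum_distrib_right[symmetric])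
    finally show "N (\<lambda>x. f x - fs x) + V \<le> worst_regret QX tau H F f" using m by simp
  qed
  have part2: "\<forall>f\<in>F. worst_regret QX tau H F fs \<le> worst_regret QX tau H F f"
  proof
    fix f assume f: "f \<in> F"
    show "worst_regret QX tau H F fs \<le> worst_regret QX tau H F f"
      using Rfs Rf[OF f] Nnn[of "\<lambda>x. f x - fs x"] by linarith
  qed
  have part3: "\<forall>f\<in>F. worst_regret QX tau H F f \<le> worst_regret QX tau H F fs
      \<longrightarrow> (AE x in QX. f x = fs x)"
  proof (intro ballI impI)
    fix f assume f: "f \<in> F" and le: "worst_regret QX tau H F f \<le> worst_regret QX tau H F fs"
    have fL: "f \<in> L2 QX" using f assms(5) by blast
    have z: "N (\<lambda>x. f x - fs x) = 0"
      using Rfs Rf[OF f] le Nnn[of "\<lambda>x. f x - fs x"] by linarith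
    have int: "integrable QX (\<lambda>x. (f x - fs x)\<^sup>2)" using L2_diff[OF fL fsL] by (simp add: L2_def)
    have "AE x in QX. (f x - fs x)\<^sup>2 = 0"
      using z integral_nonneg_eq_0_iff_AE[OF int] unfolding N_def Nrm_def by simp
    then show "AE x in QX. f x = fs x" by (rule eventually_mono) simp
  qed
  show ?thesis using fsF part2 part3 unfolding fs_def by simp
qed

end
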